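(* Let $\mathcal M$ satisfy Assumption (A), and let $F$ be a measurable function with $X=F(S,U_X)$ a.s. and $X_{S=s}=F(s,U_X)$ a.s. for all $s\in\mathcal S$. For $s\in\mathcal S$ let $f_s(u):=F(s,u)$. Then for any $s,s'\in\mathcal S$ and $\mu_s$-almost every $x\in\mathcal X_s$, $$\operatorname{supp}\big(\mu_{\langle s'|s\rangle}(\cdot\mid x)\big)\subseteq\overline{f_{s'}\circ f_s^{-1}(\{x\})},$$ where $f_s^{-1}(\{x\})$ is the preimage and the bar denotes closure in $\mathbb R^d$.
   Context: Let $(\Omega,\mathcal A,\mathbb P)$ be a probability space. A structural causal model (SCM) $\mathcal M=\langle U,G\rangle$ consists of two disjoint finite index sets $\mathcal I$ (endogenous) and $\mathcal J$ (exogenous), measurable product spaces $\mathcal V=\prod_{i\in\mathcal I}\mathcal V_i\subseteq\mathbb R^{|\mathcal I|}$ and $\mathcal U=\prod_{j\in\mathcal J}\mathcal U_j\subseteq\mathbb R^{|\mathcal J|}$, a random vector $U:\Omega\to\mathcal U$ (its components need not be independent), and for each $i\in\mathcal I$ subsets $\mathrm{Endo}(i)\subseteq\mathcal I$, $\mathrm{Exo}(i)\subseteq\mathcal J$ (endogenous and exogenous parents) and a measurable map $G_i:\mathcal V_{\mathrm{Endo}(i)}\times\mathcal U_{\mathrm{Exo}(i)}\to\mathcal V_i$. A random vector $V:\Omega\to\mathcal V$ is a solution of $\mathcal M$ if $V_i=G_i(V_{\mathrm{Endo}(i)},U_{\mathrm{Exo}(i)})$ $\mathbb P$-a.s. for every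 $i\in\mathcal I$. The graph of $\mathcal M$ has nodes $\mathcal I\cup\mathcal J$ and an edge $k\to l$ iff $l\in\mathcal I$ and $k\in\mathrm{Endo}(l)\cup\mathrm{Exo}(l)$. Assumption (A): the graph of $\mathcal M$ is acyclic; then $\mathcal M$ has a solution, unique up to $\mathbb P$-null sets. For $I\subseteq\mathcal I$ and $v_I\in\mathcal V_I$, the do-intervention $\mathrm{do}(V_I=v_I)$ produces the model $\langle U,\tilde G\rangle$ with $\tilde G_i\equiv v_i$ for $i\in I$ and $\tilde G_i=G_i$ otherwise (same $U$); it is again acyclic, and its solution is denoted $V_{V_I=v_I}$. Standing setting: the solution is $V=(X,S)$ where $X:\Omega\to\mathcal X\subseteq\mathbb R^d$ and $S:\Omega\to\mathcal S$ with $\mathcal S\subset\mathbb R$ finite and $\mathbb P(S=s)>0$ for all $s\in\mathcal S$. $U_X$ denotes the vector of exogenous parents of the components of $X$, and $U_S$ that of $S$. For $s\in\mathcal S$, $X_{S=s}$ denotes the $X$-component of the solution of the model intervened by $\mathrm{do}(S=s)$. Notation: $\mu_s:=\mathcal L(X\mid S=s)$ with support $\mathcal X_s$; $\mu_{S=s}:=\mathcal L(X_{S=s})$; $\mu_{\langle s'|s\rangle}:=\mathcal L(X_{S=s'}\mid S=s)$; $\mu_{\langle s'|s\rangle}(\cdot\mid x):=\mathcal L(X_{S=s'}\mid X=x,S=s)$ (structural counterfactual distribution of $x$). *)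

theory Defs
  imports "HOL-Probability.Probability"
begin

text \<open>The map G i is given on full vectors but is required to depend only on the parent
  coordinates Endo i and Exo i.\<close>

definition scm_graph :: "('i \<Rightarrow> 'i set) \<Rightarrow> ('i \<Rightarrow> 'j set) \<Rightarrow> ('i + 'j) rel" where
  "scm_graph Endo Exo =
     {(Inl k, Inl l) | k l. k \<in> Endo l} \<union> {(Inr j, Inl l) | j l. j \<in> Exo l}"

definition scm_wf ::
  "'o measure \<Rightarrow> ('i::finite \<Rightarrow> real set) \<Rightarrow> ('j::finite \<Rightarrow> real set)
   \<Rightarrow> ('i \<Rightarrow> 'i set) \<Rightarrow> ('i \<Rightarrow> 'j set)
   \<Rightarrow> ('i \<Rightarrow> real^'i \<Rightarrow> real^'j \<Rightarrow> real) \<Rightarrow> ('o \<Rightarrow> real^'j) \<Rightarrow> bool" where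
  "scm_wf M Vsp Usp Endo Exo G U \<longleftrightarrow>
     (\<forall>i. Vsp i \<in> sets borel) \<and> (\<forall>j. Usp j \<in> sets borel) \<and>
     U \<in> borel_measurable M \<and> (\<forall>\<omega>\<in>space M. \<forall>j. U \<omega> $ j \<in> Usp j) \<and>
     (\<forall>i. (\<lambda>(v, u). G i v u) \<in> borel_measurable (borel \<Otimes>\<^sub>M borel)) \<and>
     (\<forall>i v u. (\<forall>k. v $ k \<in> Vsp k) \<longrightarrow> (\<forall>j. u $ j \<in> Usp j) \<longrightarrow> G i v u \<in> Vsp i) \<and>
     (\<forall>i v v' u u'. (\<forall>k\<in>Endo i. v $ k = v' $ k) \<longrightarrow> (\<forall>j\<in>Exo i. u $ j = u' $ j)
        \<longrightarrow> G i v u = G i v' u')"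

definition scm_solution ::
  "'o measure \<Rightarrow> ('i::finite \<Rightarrow> real set) \<Rightarrow> ('i \<Rightarrow> real^'i \<Rightarrow> 'u \<Rightarrow> real)
   \<Rightarrow> ('o \<Rightarrow> 'u) \<Rightarrow> ('o \<Rightarrow> real^'i) \<Rightarrow> bool" where
  "scm_solution M Vsp G U V \<longleftrightarrow>
     V \<in> borel_measurable M \<and> (\<forall>\<omega>\<in>space M. \<forall>i. V \<omega> $ i \<in> Vsp i) \<and>
     (\<forall>i. AE \<omega> in M. V \<omega> $ i = G i (V \<omega>) (U \<omega>))"

definition do_int :: "('i \<Rightarrow> 'v \<Rightarrow> 'u \<Rightarrow> real) \<Rightarrow> 'i \<Rightarrow> real \<Rightarrow> ('i \<Rightarrow> 'v \<Rightarrow> 'u \<Rightarrow> real)" where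
  "do_int G i c = G(i := (\<lambda>v u. c))"

text \<open>Endogenous nodes are 'd option: None is S, Some k is the k-th component of X.\<close>
definition Xpart :: "real^('d::finite option) \<Rightarrow> real^'d" where
  "Xpart v = (\<chi> k. v $ Some k)"

definition Spart :: "real^('d::finite option) \<Rightarrow> real" where
  "Spart v = v $ None"

text \<open>The exogenous parents of X, encoded as a vector in real^'j whose coordinates outside
  JX are set to 0, and the corresponding space U_{U_X}.\<close>
definition proj_UX :: "'j set \<Rightarrow> real^'j \<Rightarrow> real^'j::finite" where
  "proj_UX JX u = (\<chi> j. if j \<in> JX then u $ j else 0)"

definition UX_space :: "('j::finite \<Rightarrow> real set) \<Rightarrow> 'j set \<Rightarrow> (real^'j) set" where
  "UX_space Usp JX = {u. (\<forall>j\<in>JX. u $ j \<in> Usp j) \<and> (\<forall>j. j \<notin> JX \<longrightarrow> u $ j = 0)}"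

definition cond_dist :: "'o measure \<Rightarrow> ('o \<Rightarrow> 'a::topological_space) \<Rightarrow> ('o \<Rightarrow> real) \<Rightarrow> real \<Rightarrow> 'a measure" where
  "cond_dist M X S s = distr (uniform_measure M {\<omega>\<in>space M. S \<omega> = s}) borel X"

definition is_cond_law_version ::
  "'o measure \<Rightarrow> ('o \<Rightarrow> 'b::topological_space) \<Rightarrow> ('o \<Rightarrow> 'a::topological_space) \<Rightarrow> ('o \<Rightarrow> real)
   \<Rightarrow> real \<Rightarrow> ('a \<Rightarrow> 'b measure) \<Rightarrow> bool" where
  "is_cond_law_version M Y X S s K \<longleftrightarrow>
     (\<forall>x. prob_space (K x) \<and> sets (K x) = sets borel) \<and>
     (\<forall>B\<in>sets borel. (\<lambda>x. emeasure (K x) B) \<in> borel_measurable borel) \<and>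
     (\<forall>A\<in>sets borel. \<forall>B\<in>sets borel.
        emeasure (uniform_measure M {\<omega>\<in>space M. S \<omega> = s}) {\<omega>\<in>space M. Y \<omega> \<in> B \<and> X \<omega> \<in> A}
        = (\<integral>\<^sup>+ x. indicator A x * emeasure (K x) B \<partial>cond_dist M X S s))"

definition measure_support :: "'a::metric_space measure \<Rightarrow> 'a set" where
  "measure_support N = {x. \<forall>e>0. emeasure N (ball x e) \<noteq> 0}"

end

theory Submission imports Defs begin


lemma inner_image:
  fixes \<rho> :: "('a::euclidean_space \<times> 'b::euclidean_space) measure"
  assumes sb: "sets \<rho> = sets borel" and fin: "emeasure \<rho> (space \<rho>) \<noteq> \<infinity>"
    and G: "\<Gamma> \<in> sets borel"
  shows "\<exists>B1 \<in> sets borel. B1 \<subseteq> snd ` \<Gamma> \<and> emeasure \<rho> (\<Gamma> \<inter> {p. snd p \<notin> B1}) = 0"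
proof -
  let ?K = "{K. K \<subseteq> \<Gamma> \<and> compact K}"
  have inn: "emeasure \<rho> \<Gamma> = (SUP K \<in> ?K. emeasure \<rho> K)"
    using inner_regular[OF sb fin G] .
  have "{} \<in> ?K" by auto
  then obtain f :: "nat \<Rightarrow> ennreal" where f: "range f \<subseteq> emeasure \<rho> ` ?K"
    and fs: "Sup (emeasure \<rho> ` ?K) = Sup (range f)"
    using ennreal_SUP_countable_SUP[of ?K "emeasure \<rho>"] by blast
  have "\<forall>n. \<exists>K. K \<in> ?K \<and> f n = emeasure \<rho> K" using f by blast
  then obtain Kn where Kn: "\<And>n. Kn n \<in> ?K" "\<And>n. f n = emeasure \<rho> (Kn n)" by metis
  define B1 where "B1 = (\<Union>n. snd ` Kn n)"
  have B1: "B1 \<in> sets borel"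
  proof -
    have "snd ` Kn n \<in> sets borel" for n using Kn(1)[of n]
      by (auto intro!: borel_closed compact_imp_closed compact_continuous_image continuous_intros)
    then show ?thesis unfolding B1_def by blast
  qed
  have B1s: "B1 \<subseteq> snd ` \<Gamma>" unfolding B1_def using Kn(1) by auto
  define G' where "G' = \<Gamma> \<inter> {p. snd p \<notin> B1}"
  have G'm: "G' \<in> sets \<rho>" unfolding G'_def sb using G B1
  proof -
    have sm: "(snd :: 'a\<times>'b \<Rightarrow> 'b) \<in> borel_measurable borel"
      by (intro borel_measurable_continuous_onI continuous_intros)
    have "snd -` (-B1) \<inter> space borel \<in> sets (borel :: ('a\<times>'b) measure)"
      using B1 by (intro measurable_sets[OF sm]) auto
    moreover have "snd -` (-B1) \<inter> space borel = {p::'a\<times>'b. snd p \<notin> B1}" by auto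
    ultimately show "\<Gamma> \<inter> {p. snd p \<notin> B1} \<in> sets borel" using G by auto
  qed
  have Km: "Kn n \<in> sets \<rho>" for n using Kn(1) sb by (auto intro: borel_compact)
  have le: "emeasure \<rho> G' + f n \<le> emeasure \<rho> \<Gamma>" for n
  proof -
    have "G' \<inter> Kn n = {}" unfolding G'_def B1_def by auto
    then have "emeasure \<rho> G' + f n = emeasure \<rho> (G' \<union> Kn n)"
      using Kn(2) G'm Km by (simp add: plus_emeasure)
    also have "\<dots> \<le> emeasure \<rho> \<Gamma>" using Kn(1) G sb by (intro emeasure_mono) (auto simp: G'_def)
    finally show ?thesis .
  qed
  have "emeasure \<rho> G' + Sup (range f) \<le> emeasure \<rho> \<Gamma>"
    using le by (simp add: ennreal_SUP_add_right SUP_le_iff)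
  then have "emeasure \<rho> G' + emeasure \<rho> \<Gamma> \<le> emeasure \<rho> \<Gamma>" using inn fs by simp
  moreover have "emeasure \<rho> \<Gamma> \<noteq> \<infinity>"
    using fin G sb by (simp add: emeasure_eq_ennreal_measure[OF finite_measure.emeasure_finite[OF finite_measureI[OF fin]]])
  ultimately have "emeasure \<rho> \<Gamma> + emeasure \<rho> G' \<le> emeasure \<rho> \<Gamma> + 0"
    "emeasure \<rho> \<Gamma> \<noteq> \<infinity>" by (simp_all add: add.commute)
  then have "emeasure \<rho> G' = 0" using ennreal_add_left_cancel_le by auto
  then show ?thesis using B1 B1s unfolding G'_def by blast
qed

lemma Xpart_meas: "Xpart \<in> borel_measurable borel"
  unfolding Xpart_def by (intro borel_measurable_continuous_onI continuous_intros)

lemma Spart_meas: "Spart \<in> borel_measurable borel"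
  unfolding Spart_def by (intro borel_measurable_continuous_onI continuous_intros)

lemma proj_UX_meas: "proj_UX JX \<in> borel_measurable borel"
  unfolding proj_UX_def
  apply (intro borel_measurable_continuous_onI continuous_on_vec_lambda)
  subgoal for j by (cases "j \<in> JX") (simp_all add: continuous_intros)
  done

lemma UX_space_sets: assumes "\<forall>j. Usp j \<in> sets borel"
  shows "UX_space Usp JX \<in> sets (borel :: (real^'j::finite) measure)"
proof -
  have "UX_space Usp JX = {u\<in>space borel. (\<forall>j\<in>JX. u $ j \<in> Usp j) \<and> (\<forall>j\<in>-JX. u $ j = 0)}"
    unfolding UX_space_def by auto
  also have "\<dots> \<in> sets borel" using assms by measurable
  finally show ?thesis .
qed

theorem proposition1:
  fixes M :: "'o measure"
    and Vsp :: "'d::finite option \<Rightarrow> real set" and Usp :: "'j::finite \<Rightarrow> real set"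
    and Endo :: "'d option \<Rightarrow> 'd option set" and Exo :: "'d option \<Rightarrow> 'j set"
    and G :: "'d option \<Rightarrow> real^('d option) \<Rightarrow> real^'j \<Rightarrow> real"
    and U :: "'o \<Rightarrow> real^'j"
    and V :: "'o \<Rightarrow> real^('d option)"
    and W :: "real \<Rightarrow> 'o \<Rightarrow> real^('d option)"
    and F :: "real \<Rightarrow> real^'j \<Rightarrow> real^'d"
  defines "X \<equiv> (\<lambda>\<omega>. Xpart (V \<omega>))"
    and "S \<equiv> (\<lambda>\<omega>. Spart (V \<omega>))"
    and "JX \<equiv> (\<Union>k. Exo (Some k))"
  assumes prob: "prob_space M"
    and wf: "scm_wf M Vsp Usp Endo Exo G U"
    and acyc: "acyclic (scm_graph Endo Exo)"
    and sol: "scm_solution M Vsp G U V"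
    and Sfin: "finite (Vsp None)"
    and Spos: "\<forall>s\<in>Vsp None. prob_space.prob M {\<omega>\<in>space M. S \<omega> = s} > 0"
    and Wsol: "\<forall>s\<in>Vsp None. scm_solution M Vsp (do_int G None s) U (W s)"
    and Fmeas: "(\<lambda>(s, u). F s u) \<in> borel_measurable (borel \<Otimes>\<^sub>M borel)"
    and FX: "AE \<omega> in M. X \<omega> = F (S \<omega>) (proj_UX JX (U \<omega>))"
    and FW: "\<forall>s\<in>Vsp None. AE \<omega> in M. Xpart (W s \<omega>) = F s (proj_UX JX (U \<omega>))"
  shows "\<forall>s\<in>Vsp None. \<forall>s'\<in>Vsp None. \<forall>K.
           is_cond_law_version M (\<lambda>\<omega>. Xpart (W s' \<omega>)) X S s K \<longrightarrow>
           (AE x in cond_dist M X S s.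
              x \<in> measure_support (cond_dist M X S s) \<longrightarrow>
              measure_support (K x) \<subseteq>
                closure (F s' ` {u \<in> UX_space Usp JX. F s u = x}))"
proof (intro ballI allI impI)
  fix s s' K
  assume s: "s \<in> Vsp None" and s': "s' \<in> Vsp None"
    and Kv: "is_cond_law_version M (\<lambda>\<omega>. Xpart (W s' \<omega>)) X S s K"
  interpret prob_space M by (rule prob)
  have "U \<in> borel_measurable M \<and> (\<forall>\<omega>\<in>space M. \<forall>j. U \<omega> $ j \<in> Usp j) \<and> (\<forall>j. Usp j \<in> sets borel)"
    using wf unfolding scm_wf_def by (elim conjE) (intro conjI; assumption)
  then have Um: "U \<in> borel_measurable M" and Usp: "\<forall>\<omega>\<in>space M. \<forall>j. U \<omega> $ j \<in> Usp j"
    and Uspb: "\<forall>j. Usp j \<in> sets borel" by simp_all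
  have Vm: "V \<in> borel_measurable M" using sol unfolding scm_solution_def by auto
  have Wm: "W s' \<in> borel_measurable M" using Wsol s' unfolding scm_solution_def by auto
  have Xm[measurable]: "X \<in> borel_measurable M" unfolding X_def
    using measurable_compose[OF Vm Xpart_meas] by (simp add: o_def)
  have Sm[measurable]: "S \<in> borel_measurable M" unfolding S_def
    using measurable_compose[OF Vm Spart_meas] by (simp add: o_def)
  define Y where "Y = (\<lambda>\<omega>. Xpart (W s' \<omega>))"
  have Ym[measurable]: "Y \<in> borel_measurable M" unfolding Y_def
    using measurable_compose[OF Wm Xpart_meas] by (simp add: o_def)
  define Ux where "Ux = (\<lambda>\<omega>. proj_UX JX (U \<omega>))"
  have Uxm[measurable]: "Ux \<in> borel_measurable M" unfolding Ux_def
    using measurable_compose[OF Um proj_UX_meas] by (simp add: o_def)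
  have UxS: "Ux \<omega> \<in> UX_space Usp JX" if "\<omega> \<in> space M" for \<omega>
    using Usp that unfolding Ux_def UX_space_def proj_UX_def by auto
  have Fm[measurable]: "(\<lambda>u. F t u) \<in> borel_measurable borel" for t
  proof -
    have "(\<lambda>u. (t, u)) \<in> borel \<rightarrow>\<^sub>M (borel \<Otimes>\<^sub>M borel)" by measurable
    from measurable_compose[OF this Fmeas] show ?thesis by simp
  qed
  have UXs[measurable]: "UX_space Usp JX \<in> sets borel" using UX_space_sets[OF Uspb] .
  define A where "A = {\<omega>\<in>space M. S \<omega> = s}"
  have Am: "A \<in> sets M" unfolding A_def by measurable
  define \<mu> where "\<mu> = cond_dist M X S s"
  have smu: "sets \<mu> = sets borel" unfolding \<mu>_def cond_dist_def by simp
  define \<rho> where "\<rho> = distr M borel (\<lambda>\<omega>. (Ux \<omega>, X \<omega>))"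
  have pm: "(\<lambda>\<omega>. (Ux \<omega>, X \<omega>)) \<in> M \<rightarrow>\<^sub>M borel" by measurable
  have srho: "sets \<rho> = sets borel" unfolding \<rho>_def by simp
  have frho: "emeasure \<rho> (space \<rho>) \<noteq> \<infinity>" unfolding \<rho>_def
    using pm by (simp add: emeasure_distr)
  have Kprop0: "(\<forall>x. prob_space (K x) \<and> sets (K x) = sets borel) \<and>
    (\<forall>B\<in>sets borel. (\<lambda>x. emeasure (K x) B) \<in> borel_measurable borel) \<and>
    (\<forall>A'\<in>sets borel. \<forall>B\<in>sets borel.
        emeasure (uniform_measure M A) {\<omega>\<in>space M. Y \<omega> \<in> B \<and> X \<omega> \<in> A'}
        = (\<integral>\<^sup>+ x. indicator A' x * emeasure (K x) B \<partial>\<mu>))"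
    using Kv unfolding is_cond_law_version_def Y_def A_def \<mu>_def by (elim conjE) (intro conjI; assumption)
  note Kprop = Kprop0[THEN conjunct1] Kprop0[THEN conjunct2, THEN conjunct1] Kprop0[THEN conjunct2, THEN conjunct2]
  have claim: "AE x in \<mu>. (\<forall>u\<in>UX_space Usp JX. F s u = x \<longrightarrow> F s' u \<notin> b) \<longrightarrow> emeasure (K x) b = 0"
    if b: "b \<in> sets borel" for b
  proof -
    define \<Gamma> where "\<Gamma> = {p::((real^'j) \<times> (real^'d)). fst p \<in> UX_space Usp JX \<and> F s (fst p) = snd p \<and> F s' (fst p) \<in> b}"
    have [measurable]: "(fst :: (real^'j) \<times> (real^'d) \<Rightarrow> _) \<in> borel_measurable borel"
        "(snd :: (real^'j) \<times> (real^'d) \<Rightarrow> _) \<in> borel_measurable borel"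
        by (intro borel_measurable_continuous_onI continuous_intros)+
    have Gm: "\<Gamma> \<in> sets borel"
    proof -
      have [measurable]: "(\<lambda>p::(real^'j) \<times> (real^'d). F t (fst p)) \<in> borel_measurable borel" for t
        using measurable_compose[of fst borel borel "F t"] by (simp add: o_def)
      have "\<Gamma> = {p\<in>space borel. fst p \<in> UX_space Usp JX \<and> F s (fst p) = snd p \<and> F s' (fst p) \<in> b}"
        unfolding \<Gamma>_def by auto
      also have "\<dots> \<in> sets borel" using b by measurable
      finally show ?thesis .
    qed
    obtain B1 where B1: "B1 \<in> sets borel" "B1 \<subseteq> snd ` \<Gamma>"
      and B1z: "emeasure \<rho> (\<Gamma> \<inter> {p. snd p \<notin> B1}) = 0"
      using inner_image[OF srho frho Gm] by blast
    have Kbm[measurable]: "(\<lambda>x. emeasure (K x) b) \<in> borel_measurable borel" using Kprop(2) b by auto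
    define N where "N = {x\<in>space borel. emeasure (K x) b \<noteq> 0 \<and> x \<notin> B1}"
    have Nm: "N \<in> sets borel" unfolding N_def using B1(1) by measurable
    define T where "T = {\<omega>\<in>space M. Y \<omega> \<in> b \<and> X \<omega> \<in> N}"
    have Tm: "T \<in> sets M" unfolding T_def using b Nm by measurable
    define G' where "G' = \<Gamma> \<inter> {p. snd p \<notin> B1}"
    have G'm: "G' \<in> sets borel"
    proof -
      have "G' = {p\<in>space borel. p \<in> \<Gamma> \<and> snd p \<notin> B1}" unfolding G'_def by auto
      also have "\<dots> \<in> sets borel" using Gm B1(1) by measurable
      finally show ?thesis .
    qed
    have "emeasure M (A \<inter> T) \<le> emeasure M ((\<lambda>\<omega>. (Ux \<omega>, X \<omega>)) -` G' \<inter> space M)"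
    proof (rule emeasure_mono_AE)
      show "(\<lambda>\<omega>. (Ux \<omega>, X \<omega>)) -` G' \<inter> space M \<in> sets M"
        using measurable_sets[OF pm G'm] by simp
      have "AE \<omega> in M. X \<omega> = F (S \<omega>) (Ux \<omega>)" using FX unfolding Ux_def .
      moreover have "AE \<omega> in M. Y \<omega> = F s' (Ux \<omega>)" using FW s' unfolding Ux_def Y_def by auto
      ultimately show "AE \<omega> in M. \<omega> \<in> A \<inter> T \<longrightarrow> \<omega> \<in> (\<lambda>\<omega>. (Ux \<omega>, X \<omega>)) -` G' \<inter> space M"
      proof eventually_elim
        case (elim \<omega>)
        show ?case
        proof
          assume w: "\<omega> \<in> A \<inter> T"
          then have "\<omega> \<in> space M" "S \<omega> = s" "Y \<omega> \<in> b" "X \<omega> \<in> N" unfolding A_def T_def by auto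
          then show "\<omega> \<in> (\<lambda>\<omega>. (Ux \<omega>, X \<omega>)) -` G' \<inter> space M"
            using elim UxS unfolding G'_def \<Gamma>_def N_def by auto
        qed
      qed
    qed
    also have "\<dots> = emeasure \<rho> G'" unfolding \<rho>_def using pm G'm by (simp add: emeasure_distr)
    also have "\<dots> = 0" using B1z unfolding G'_def .
    finally have AT: "emeasure M (A \<inter> T) = 0" by simp
    have "(\<integral>\<^sup>+ x. indicator N x * emeasure (K x) b \<partial>\<mu>) = emeasure (uniform_measure M A) T"
      using Kprop(3) Nm b unfolding T_def by auto
    also have "\<dots> = 0" using AT Am Tm by simp
    finally have "(\<integral>\<^sup>+ x. indicator N x * emeasure (K x) b \<partial>\<mu>) = 0" .
    moreover have "(\<lambda>x. indicator N x * emeasure (K x) b) \<in> borel_measurable \<mu>"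
      using Nm unfolding measurable_cong_sets[OF smu refl] by measurable
    ultimately have ae: "AE x in \<mu>. indicator N x * emeasure (K x) b = 0"
      by (simp add: nn_integral_0_iff_AE)
    then show ?thesis
    proof eventually_elim
      case (elim x)
      show ?case
      proof (intro impI, rule ccontr)
        assume pre: "\<forall>u\<in>UX_space Usp JX. F s u = x \<longrightarrow> F s' u \<notin> b"
          and nz: "emeasure (K x) b \<noteq> 0"
        have "x \<notin> B1"
        proof
          assume "x \<in> B1"
          then obtain p where "p \<in> \<Gamma>" "x = snd p" using B1(2) by blast
          then show False using pre unfolding \<Gamma>_def by blast
        qed
        then have "x \<in> N" using nz unfolding N_def by auto
        then show False using elim nz by simp
      qed
    qed
  qed
  obtain \<B> :: "(real^'d) set set" where cB: "countable \<B>" and tB: "topological_basis \<B>"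
    using ex_countable_basis by blast
  have "AE x in \<mu>. \<forall>b\<in>\<B>. (\<forall>u\<in>UX_space Usp JX. F s u = x \<longrightarrow> F s' u \<notin> b) \<longrightarrow> emeasure (K x) b = 0"
  proof (rule AE_ball_countable[OF cB, THEN iffD2], rule ballI)
    fix b assume "b \<in> \<B>"
    then have "b \<in> sets borel" using tB by (simp add: topological_basis_open)
    then show "AE x in \<mu>. (\<forall>u\<in>UX_space Usp JX. F s u = x \<longrightarrow> F s' u \<notin> b) \<longrightarrow> emeasure (K x) b = 0"
      by (rule claim)
  qed
  then show "AE x in cond_dist M X S s. x \<in> measure_support (cond_dist M X S s) \<longrightarrow>
      measure_support (K x) \<subseteq> closure (F s' ` {u \<in> UX_space Usp JX. F s u = x})"
    unfolding \<mu>_def[symmetric]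
  proof eventually_elim
    case (elim x)
    show ?case
    proof (intro impI subsetI, rule ccontr)
      fix y assume ys: "y \<in> measure_support (K x)"
        and yn: "y \<notin> closure (F s' ` {u \<in> UX_space Usp JX. F s u = x})"
      have oc: "open (- closure (F s' ` {u \<in> UX_space Usp JX. F s u = x}))" by (rule open_Compl, rule closed_closure)
      obtain b where b: "b \<in> \<B>" "y \<in> b" "b \<subseteq> - closure (F s' ` {u \<in> UX_space Usp JX. F s u = x})"
        using topological_basisE[OF tB oc] yn by blast
      have ob: "open b" using tB b(1) by (simp add: topological_basis_open)
      have pre: "\<forall>u\<in>UX_space Usp JX. F s u = x \<longrightarrow> F s' u \<notin> b"
      proof (intro ballI impI)
        fix u assume "u \<in> UX_space Usp JX" "F s u = x"
        then have "F s' u \<in> F s' ` {u \<in> UX_space Usp JX. F s u = x}" by (intro imageI) simp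
        then have "F s' u \<in> closure (F s' ` {u \<in> UX_space Usp JX. F s u = x})"
          by (rule subsetD[OF closure_subset])
        then show "F s' u \<notin> b" using b(3) by (auto simp del: closure_closure)
      qed
      have z: "emeasure (K x) b = 0" using bspec[OF elim b(1)] pre by (rule mp)
      obtain e where e: "e > 0" "ball y e \<subseteq> b" using ob b(2) open_contains_ball by blast
      have sb: "b \<in> sets (K x)" using Kprop(1) ob by (simp add: borel_open)
      have "emeasure (K x) (ball y e) \<le> emeasure (K x) b"
        using sb e(2) by (rule emeasure_mono[rotated])
      then have "emeasure (K x) (ball y e) = 0" using z by simp
      moreover have "emeasure (K x) (ball y e) \<noteq> 0" using ys e(1) unfolding measure_support_def by blast
      ultimately show False by blast
    qed
  qed
qed

end
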